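(* Let $\xi>0$ be such that $D^TD-\xi^2I$ is nonsingular. Then $\lambda\in\mathbb{C}$ is an eigenvalue of the operator $\mathcal{L}_{\xi}$ if and only if $-\bar{\lambda}$ is an eigenvalue of $\mathcal{L}_{\xi}$.
   Context: Let $n,m,n_u,n_y$ be positive integers, $A_0,\dots,A_m\in\mathbb{R}^{n\times n}$, $B\in\mathbb{R}^{n\times n_u}$, $C\in\mathbb{R}^{n_y\times n}$, $D\in\mathbb{R}^{n_y\times n_u}$, delays $\tau_1,\dots,\tau_m\geq0$, $\tau_{\max}=\max_i\tau_i$. For $\xi>0$ put $D_\xi=D^TD-\xi^2I_{n_u}$, $\tilde D_\xi=DD^T-\xi^2I_{n_y}$. Define $2n\times2n$ matrices $M_0=\begin{bmatrix} A_0-BD_\xi^{-1}D^TC & -BD_\xi^{-1}B^T\\ \xi^2 C^T\tilde D_\xi^{-1}C & -A_0^T+C^TDD_\xi^{-1}B^T\end{bmatrix}$, $M_i=\begin{bmatrix}A_i&0\\0&0\end{bmatrix}$, $M_{-i}=\begin{bmatrix}0&0\\0&-A_i^T\end{bmatrix}$, $1\le i\le m$. Let $X=\mathcal{C}([-\tau_{\max},\tau_{\max}],\mathbb{C}^{2n})$. The operator $\mathcal{L}_\xi$ on $X$ has domain $\{\phi\in X:\phi'\in X,\ \phi'(0)=M_0\phi(0)+\sum_{i=1}^m(M_i\phi(-\tau_i)+M_{-i}\phi(\tau_i))\}$ and $\mathcal{L}_\xi\phi=\phi'$. An eigenvalue is $\lambda\in\mathbb{C}$ such that $\mathcal{L}_\xi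 u=\lambda u$ for some nonzero $u$ in the domain. *)

theory Defs
  imports "HOL-Analysis.Analysis"
begin

definition cmat :: "real^'c^'r \<Rightarrow> complex^'c^'r" where
  "cmat A = (\<chi> i j. complex_of_real (A $ i $ j))"

text \<open>2x2 block matrix; the index type 'n + 'n models {1..2n}
  (Inl = first n coordinates, Inr = last n coordinates).\<close>
definition blk :: "'a^'n^'n \<Rightarrow> 'a^'n^'n \<Rightarrow> 'a^'n^'n \<Rightarrow> 'a^'n^'n \<Rightarrow> 'a^('n+'n)^('n+'n)" where
  "blk P Q R S = (\<chi> i j. (case i of
      Inl a \<Rightarrow> (case j of Inl b \<Rightarrow> P $ a $ b | Inr b \<Rightarrow> Q $ a $ b)
    | Inr a \<Rightarrow> (case j of Inl b \<Rightarrow> R $ a $ b | Inr b \<Rightarrow> S $ a $ b)))"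

definition Dxi :: "real^'u^'y \<Rightarrow> real \<Rightarrow> real^'u^'u" where
  "Dxi D \<xi> = transpose D ** D - (\<xi>\<^sup>2) *\<^sub>R mat 1"

definition Dtxi :: "real^'u^'y \<Rightarrow> real \<Rightarrow> real^'y^'y" where
  "Dtxi D \<xi> = D ** transpose D - (\<xi>\<^sup>2) *\<^sub>R mat 1"

definition M0 :: "real^'n^'n \<Rightarrow> real^'u^'n \<Rightarrow> real^'n^'y \<Rightarrow> real^'u^'y \<Rightarrow> real
    \<Rightarrow> complex^('n+'n)^('n+'n)" where
  "M0 A0 B C D \<xi> = cmat (blk
      (A0 - B ** matrix_inv (Dxi D \<xi>) ** transpose D ** C)
      (- (B ** matrix_inv (Dxi D \<xi>) ** transpose B))
      ((\<xi>\<^sup>2) *\<^sub>R (transpose C ** matrix_inv (Dtxi D \<xi>) ** C))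
      (- transpose A0 + transpose C ** D ** matrix_inv (Dxi D \<xi>) ** transpose B))"

definition Mpos :: "real^'n^'n \<Rightarrow> complex^('n+'n)^('n+'n)" where
  "Mpos Ai = cmat (blk Ai 0 0 0)"

definition Mneg :: "real^'n^'n \<Rightarrow> complex^('n+'n)^('n+'n)" where
  "Mneg Ai = cmat (blk 0 0 0 (- transpose Ai))"

definition tau_max :: "nat \<Rightarrow> (nat \<Rightarrow> real) \<Rightarrow> real" where
  "tau_max m \<tau> = Max (\<tau> ` {1..m})"

text \<open>A : nat => matrix gives A_0,...,A_m; tau gives tau_1..tau_m.\<close>
definition is_eigenvalue ::
  "nat \<Rightarrow> (nat \<Rightarrow> real^'n^'n) \<Rightarrow> real^'u^'n \<Rightarrow> real^'n^'y \<Rightarrow> real^'u^'y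
   \<Rightarrow> (nat \<Rightarrow> real) \<Rightarrow> real \<Rightarrow> complex \<Rightarrow> bool" where
  "is_eigenvalue m A B C D \<tau> \<xi> lam \<longleftrightarrow>
    (let T = tau_max m \<tau>; I = {-T..T} in
     \<exists>(u :: real \<Rightarrow> complex^('n+'n)) u'.
       continuous_on I u \<and> continuous_on I u' \<and>
       (\<forall>t\<in>I. (u has_vector_derivative u' t) (at t within I)) \<and>
       u' 0 = M0 (A 0) B C D \<xi> *v u 0
              + (\<Sum>i=1..m. Mpos (A i) *v u (- \<tau> i) + Mneg (A i) *v u (\<tau> i)) \<and>
       (\<forall>t\<in>I. u' t = lam *s u t) \<and>
       (\<exists>t\<in>I. u t \<noteq> 0))"

end

theory Submission
  imports Defs
begin

lemma transpose_diff': "transpose (X - Y) = transpose X - (transpose Y :: 'a::ab_group_add^'n^'m)"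
  by (simp add: vec_eq_iff transpose_def)
lemma transpose_add': "transpose (X + Y) = transpose X + (transpose Y :: 'a::ab_group_add^'n^'m)"
  by (simp add: vec_eq_iff transpose_def)
lemma transpose_uminus': "transpose (- X) = - (transpose X :: 'a::ab_group_add^'n^'m)"
  by (simp add: vec_eq_iff transpose_def)

lemma inv_sym:
  fixes X :: "real^'a^'a"
  assumes "invertible X" "transpose X = X"
  shows "transpose (matrix_inv X) = matrix_inv X"
proof -
  have h: "X ** matrix_inv X = mat 1 \<and> matrix_inv X ** X = mat 1"
    using assms(1) unfolding invertible_def matrix_inv_def by (rule someI_ex)
  let ?Y = "transpose (matrix_inv X)"
  have "X ** ?Y = mat 1" using h assms(2)
    by (metis matrix_transpose_mul transpose_mat)
  then have "matrix_inv X ** (X ** ?Y) = matrix_inv X" by simp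
  then show ?thesis using h by (simp add: matrix_mul_assoc)
qed

lemma Dxi_sym: "transpose (Dxi D \<xi>) = Dxi D \<xi>"
  unfolding Dxi_def by (simp add: transpose_diff' transpose_scalar matrix_transpose_mul)
lemma Dtxi_sym: "transpose (Dtxi D \<xi>) = Dtxi D \<xi>"
  unfolding Dtxi_def by (simp add: transpose_diff' transpose_scalar matrix_transpose_mul)

lemma inv_ker: "invertible (X::'a::field^'n^'n) \<longleftrightarrow> (\<forall>x. X *v x = 0 \<longrightarrow> x = 0)"
  by (metis invertible_left_inverse matrix_left_invertible_ker)

lemma Dtxi_inv:
  fixes D :: "real^'u^'y"
  assumes "invertible (Dxi D \<xi>)" "\<xi> \<noteq> 0"
  shows "invertible (Dtxi D \<xi>)"
  unfolding inv_ker
proof (intro allI impI)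
  fix x assume x: "Dtxi D \<xi> *v x = 0"
  have e: "D *v (transpose D *v x) = \<xi>\<^sup>2 *\<^sub>R x" using x
    unfolding Dtxi_def by (simp add: matrix_vector_mult_diff_rdistrib matrix_vector_mul_assoc
       scaleR_matrix_vector_assoc[symmetric] del: transpose_matrix_vector)
  have "Dxi D \<xi> *v (transpose D *v x) = 0"
    unfolding Dxi_def using e
    by (simp add: matrix_vector_mult_diff_rdistrib matrix_vector_mul_assoc[symmetric]
       scaleR_matrix_vector_assoc[symmetric] matrix_scaleR_vector_ac[symmetric] matrix_vector_mult_scaleR del: transpose_matrix_vector)
  then have "transpose D *v x = 0" using assms(1) inv_ker by blast
  then show "x = 0" using e assms(2) by simp
qed

definition "PP A0 B C D \<xi> = A0 - B ** matrix_inv (Dxi D \<xi>) ** transpose D ** C"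
definition "QQ B D \<xi> = - (B ** matrix_inv (Dxi D \<xi>) ** transpose B)"
definition "RR C D \<xi> = (\<xi>\<^sup>2) *\<^sub>R (transpose C ** matrix_inv (Dtxi D \<xi>) ** C)"
definition "SS A0 B C D \<xi> = - transpose A0 + transpose C ** D ** matrix_inv (Dxi D \<xi>) ** transpose B"

lemma M0_eq: "M0 A0 B C D \<xi> = cmat (blk (PP A0 B C D \<xi>) (QQ B D \<xi>) (RR C D \<xi>) (SS A0 B C D \<xi>))"
  unfolding M0_def PP_def QQ_def RR_def SS_def ..

lemma tr_entry: "transpose X $ a $ b = X $ b $ a"
  by (simp add: transpose_def)

lemma PS: assumes "invertible (Dxi D \<xi>)"
  shows "SS A0 B C D \<xi> $ a $ b = - PP A0 B C D \<xi> $ b $ a"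
proof -
  have "transpose (PP A0 B C D \<xi>) = - SS A0 B C D \<xi>"
    unfolding PP_def SS_def using inv_sym[OF assms Dxi_sym]
    by (simp add: transpose_diff' matrix_transpose_mul matrix_mul_assoc)
  then show ?thesis by (drule_tac arg_cong[where f="\<lambda>X. X$a$b"]) (simp add: tr_entry)
qed

lemma QS: assumes "invertible (Dxi D \<xi>)"
  shows "QQ B D \<xi> $ a $ b = QQ B D \<xi> $ b $ a"
proof -
  have "transpose (QQ B D \<xi>) = QQ B D \<xi>"
    unfolding QQ_def using inv_sym[OF assms Dxi_sym]
    by (simp add: transpose_uminus' matrix_transpose_mul matrix_mul_assoc)
  then show ?thesis by (drule_tac arg_cong[where f="\<lambda>X. X$b$a"]) (simp add: tr_entry)
qed

lemma RS: assumes "invertible (Dxi D \<xi>)" "\<xi> \<noteq> 0"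
  shows "RR C D \<xi> $ a $ b = RR C D \<xi> $ b $ a"
proof -
  have "transpose (RR C D \<xi>) = RR C D \<xi>"
    unfolding RR_def using inv_sym[OF Dtxi_inv[OF assms] Dtxi_sym]
    by (simp add: transpose_scalar matrix_transpose_mul matrix_mul_assoc)
  then show ?thesis by (drule_tac arg_cong[where f="\<lambda>X. X$b$a"]) (simp add: tr_entry)
qed

definition Dl :: "nat \<Rightarrow> (nat \<Rightarrow> real^'n^'n) \<Rightarrow> real^'u^'n \<Rightarrow> real^'n^'y \<Rightarrow> real^'u^'y
   \<Rightarrow> (nat \<Rightarrow> real) \<Rightarrow> real \<Rightarrow> complex \<Rightarrow> complex^('n+'n)^('n+'n)" where
"Dl m A B C D \<tau> \<xi> lam = (\<chi> i j. (if i = j then lam else 0) - M0 (A 0) B C D \<xi> $ i $ j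
   - (\<Sum>k=1..m. exp (- (lam * of_real (\<tau> k))) * Mpos (A k) $ i $ j + exp (lam * of_real (\<tau> k)) * Mneg (A k) $ i $ j))"

lemma Dl_LL: "Dl m A B C D \<tau> \<xi> lam $ Inl a $ Inl b = (if a = b then lam else 0) - of_real (PP (A 0) B C D \<xi> $ a $ b)
   - (\<Sum>k=1..m. exp (- (lam * of_real (\<tau> k))) * of_real (A k $ a $ b))"
  by (simp add: Dl_def M0_eq cmat_def blk_def Mpos_def Mneg_def)
lemma Dl_LR: "Dl m A B C D \<tau> \<xi> lam $ Inl a $ Inr b = - of_real (QQ B D \<xi> $ a $ b)"
  by (simp add: Dl_def M0_eq cmat_def blk_def Mpos_def Mneg_def)
lemma Dl_RL: "Dl m A B C D \<tau> \<xi> lam $ Inr a $ Inl b = - of_real (RR C D \<xi> $ a $ b)"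
  by (simp add: Dl_def M0_eq cmat_def blk_def Mpos_def Mneg_def)
lemma Dl_RR: "Dl m A B C D \<tau> \<xi> lam $ Inr a $ Inr b = (if a = b then lam else 0) - of_real (SS (A 0) B C D \<xi> $ a $ b)
   + (\<Sum>k=1..m. exp (lam * of_real (\<tau> k)) * of_real (A k $ b $ a))"
  by (simp add: Dl_def M0_eq cmat_def blk_def Mpos_def Mneg_def tr_entry sum_negf)

definition sw :: "'a + 'a \<Rightarrow> 'a + 'a" where "sw = case_sum Inr Inl"
definition sg :: "'a + 'a \<Rightarrow> complex" where "sg = case_sum (\<lambda>_. 1) (\<lambda>_. -1)"

lemma sw_simps[simp]: "sw (Inl a) = Inr a" "sw (Inr a) = Inl a" by (simp_all add: sw_def)
lemma sg_simps[simp]: "sg (Inl a) = 1" "sg (Inr a) = -1" by (simp_all add: sg_def)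
lemma sw_sw[simp]: "sw (sw i) = i" by (cases i) auto
lemma sg_sq[simp]: "sg i * sg i = 1" by (cases i) auto
lemma sg_sq'[simp]: "sg i * (sg i * y) = y" by (cases i) auto
lemma bij_sw: "bij sw" by (metis bij_betw_byWitness sw_sw top_greatest subsetI image_iff) 

lemma Dl_swap:
  assumes "invertible (Dxi D \<xi>)" "\<xi> \<noteq> 0"
  shows "Dl m A B C D \<tau> \<xi> (-lam) $ j $ i = - sg i * sg j * Dl m A B C D \<tau> \<xi> lam $ sw i $ sw j"
proof (cases i; cases j)
  fix a b assume "i = Inl a" "j = Inl b" then show ?thesis
    by (simp add: Dl_LL Dl_RR PS[OF assms(1)])
next
  fix a b assume "i = Inl a" "j = Inr b" then show ?thesis
    by (simp add: Dl_LR Dl_RL RS[OF assms])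
next
  fix a b assume "i = Inr a" "j = Inl b" then show ?thesis
    by (simp add: Dl_LR Dl_RL QS[OF assms(1)])
next
  fix a b assume "i = Inr a" "j = Inr b" then show ?thesis
    by (simp add: Dl_LL Dl_RR PS[OF assms(1)])
qed

lemma Dl_cnj: "Dl m A B C D \<tau> \<xi> (cnj lam) $ i $ j = cnj (Dl m A B C D \<tau> \<xi> lam $ i $ j)"
  by (cases i; cases j) (simp_all add: Dl_LL Dl_RR Dl_LR Dl_RL exp_cnj)

lemma sing_det: "(\<exists>x. x \<noteq> 0 \<and> X *v x = 0) \<longleftrightarrow> det (X::complex^'n^'n) = 0"
proof -
  have "det (matrix ((*v) X)) \<noteq> 0 \<longleftrightarrow> inj ((*v) X)"
    by (rule det_nz_iff_inj_gen) (rule matrix_vector_mul_linear_gen)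
  then show ?thesis
    by (auto simp: vec.inj_iff_eq_0 matrix_vector_mul_linear_gen)
qed

lemma null_neg:
  assumes "invertible (Dxi D \<xi>)" "\<xi> \<noteq> 0" "v \<noteq> 0" "Dl m A B C D \<tau> \<xi> lam *v v = 0"
  shows "\<exists>w. w \<noteq> 0 \<and> Dl m A B C D \<tau> \<xi> (-lam) *v w = 0"
proof -
  let ?X = "Dl m A B C D \<tau> \<xi> lam" and ?Y = "Dl m A B C D \<tau> \<xi> (-lam)"
  define v' where "v' = (\<chi> i. sg i * v $ sw i)"
  have "v' \<noteq> 0"
  proof
    assume "v' = 0"
    have "v $ sw i = 0" for i
    proof -
      have "sg i * v $ sw i = 0" proof -
        have "v' $ i = 0" using \<open>v' = 0\<close> by simp
        then show ?thesis by (simp add: v'_def)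
      qed
      then show ?thesis by (cases i) auto
    qed
    then have "v $ i = 0" for i by (metis sw_sw)
    then show False using assms(3) by (simp add: vec_eq_iff)
  qed
  moreover have "transpose ?Y *v v' = 0"
  proof -
    have "(transpose ?Y *v v') $ j = 0" for j
    proof -
      have "(transpose ?Y *v v') $ j = (\<Sum>i\<in>UNIV. ?Y $ i $ j * v' $ i)"
        by (simp add: matrix_vector_mult_def transpose_def)
      also have "\<dots> = (\<Sum>i\<in>UNIV. - sg j * (?X $ sw j $ sw i * v $ sw i))"
      proof (rule sum.cong[OF refl])
        fix x
        have "?Y $ x $ j = - sg j * sg x * ?X $ sw j $ sw x" by (rule Dl_swap[OF assms(1,2)])
        then show "?Y $ x $ j * v' $ x = - sg j * (?X $ sw j $ sw x * v $ sw x)"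
        proof -
          have "?Y $ x $ j * v' $ x = (- sg j * sg x * ?X $ sw j $ sw x) * (sg x * v $ sw x)"
            using \<open>?Y $ x $ j = _\<close> by (simp add: v'_def)
          also have "\<dots> = - sg j * (sg x * sg x) * (?X $ sw j $ sw x * v $ sw x)"
            by (simp only: mult_ac)
          finally show ?thesis by simp
        qed
      qed
      also have "\<dots> = - sg j * (\<Sum>i\<in>UNIV. ?X $ sw j $ sw i * v $ sw i)"
        by (simp add: sum_distrib_left)
      also have "(\<Sum>i\<in>UNIV. ?X $ sw j $ sw i * v $ sw i) = (\<Sum>i\<in>UNIV. ?X $ sw j $ i * v $ i)"
        using sum.reindex[of sw UNIV "\<lambda>i. ?X $ sw j $ i * v $ i"]
        by (simp add: bij_is_inj[OF bij_sw] bij_is_surj[OF bij_sw] o_def)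
      also have "\<dots> = (?X *v v) $ sw j" by (simp add: matrix_vector_mult_def)
      finally show ?thesis using assms(4) by simp
    qed
    then show ?thesis by (simp add: vec_eq_iff)
  qed
  ultimately have "det (transpose ?Y) = 0" using sing_det by blast
  then have "det ?Y = 0" by simp
  then show ?thesis using sing_det by blast
qed

lemma null_cnj:
  assumes "w \<noteq> 0" "Dl m A B C D \<tau> \<xi> lam *v w = 0"
  shows "\<exists>w. w \<noteq> 0 \<and> Dl m A B C D \<tau> \<xi> (cnj lam) *v w = 0"
proof (intro exI conjI)
  let ?w = "\<chi> i. cnj (w $ i)"
  show "?w \<noteq> 0" using assms(1) by (simp add: vec_eq_iff)
  have "(Dl m A B C D \<tau> \<xi> (cnj lam) *v ?w) $ i = cnj ((Dl m A B C D \<tau> \<xi> lam *v w) $ i)" for i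
    by (simp add: matrix_vector_mult_def Dl_cnj)
  then show "Dl m A B C D \<tau> \<xi> (cnj lam) *v ?w = 0" using assms(2) by (simp add: vec_eq_iff)
qed

lemma Dl_mult: "Dl m A B C D \<tau> \<xi> lam *v v = lam *s v - (M0 (A 0) B C D \<xi> *v v +
   (\<Sum>k=1..m. exp (- (lam * of_real (\<tau> k))) *s (Mpos (A k) *v v) + exp (lam * of_real (\<tau> k)) *s (Mneg (A k) *v v)))"
proof -
  have "(Dl m A B C D \<tau> \<xi> lam *v v) $ i = (lam *s v - (M0 (A 0) B C D \<xi> *v v +
   (\<Sum>k=1..m. exp (- (lam * of_real (\<tau> k))) *s (Mpos (A k) *v v) + exp (lam * of_real (\<tau> k)) *s (Mneg (A k) *v v)))) $ i" for i
  proof -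
    have "(Dl m A B C D \<tau> \<xi> lam *v v) $ i = (\<Sum>j\<in>UNIV. (if i = j then lam else 0) * v $ j) - (\<Sum>j\<in>UNIV. M0 (A 0) B C D \<xi> $ i $ j * v $ j)
      - (\<Sum>j\<in>UNIV. \<Sum>k=1..m. exp (- (lam * of_real (\<tau> k))) * (Mpos (A k) $ i $ j * v $ j) + exp (lam * of_real (\<tau> k)) * (Mneg (A k) $ i $ j * v $ j))"
      by (simp add: Dl_def matrix_vector_mult_def algebra_simps sum_subtractf sum_distrib_right sum_distrib_left sum.distrib)
    also have "\<dots> = lam * v $ i - (\<Sum>j\<in>UNIV. M0 (A 0) B C D \<xi> $ i $ j * v $ j)
      - (\<Sum>k=1..m. exp (- (lam * of_real (\<tau> k))) * (\<Sum>j\<in>UNIV. Mpos (A k) $ i $ j * v $ j) + exp (lam * of_real (\<tau> k)) * (\<Sum>j\<in>UNIV. Mneg (A k) $ i $ j * v $ j))"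
    proof -
      have "(\<Sum>j\<in>UNIV. (if i = j then lam else 0) * v $ j) = (\<Sum>j\<in>UNIV. if i = j then lam * v $ j else 0)"
        by (rule sum.cong) auto
      then show ?thesis by (simp add: sum.swap[of _ UNIV] sum.distrib sum_distrib_left)
    qed
    also have "\<dots> = (lam *s v - (M0 (A 0) B C D \<xi> *v v +
      (\<Sum>k=1..m. exp (- (lam * of_real (\<tau> k))) *s (Mpos (A k) *v v) + exp (lam * of_real (\<tau> k)) *s (Mneg (A k) *v v)))) $ i"
      by (simp add: matrix_vector_mult_def sum_component)
    finally show ?thesis .
  qed
  then show ?thesis by (simp add: vec_eq_iff)
qed

lemma bl_smult: "bounded_linear (\<lambda>z::complex. z *s (w::complex^'k))"
proof -
  have "linear (\<lambda>z::complex. z *s w)"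
    by (rule linearI) (simp_all add: vec_eq_iff algebra_simps)
  then show ?thesis by (simp add: linear_conv_bounded_linear)
qed

lemma exp_deriv:
  "((\<lambda>t. exp (lam * of_real t) *s (w::complex^'k)) has_vector_derivative exp (lam * of_real t) *s (lam *s w)) (at t within S)"
proof -
  have "((\<lambda>z. exp (lam * z)) has_field_derivative exp (lam * of_real t) * lam) (at (of_real t))"
    by (auto intro!: derivative_eq_intros)
  then have "((\<lambda>t::real. exp (lam * of_real t)) has_vector_derivative exp (lam * of_real t) * lam) (at t within S)"
    by (rule has_vector_derivative_real_field)
  from bounded_linear.has_vector_derivative[OF bl_smult this]
  show ?thesis by (simp add: vector_smult_assoc)
qed

lemma eig_iff:
  assumes "m \<ge> 1" "\<forall>i\<in>{1..m}. \<tau> i \<ge> 0"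
  shows "is_eigenvalue m A B C D \<tau> \<xi> lam \<longleftrightarrow> (\<exists>v. v \<noteq> 0 \<and> Dl m A B C D \<tau> \<xi> lam *v v = 0)"
proof -
  define T where "T = tau_max m \<tau>"
  define I where "I = {-T..T}"
  have tleT: "\<tau> k \<le> T" if "k \<in> {1..m}" for k
    unfolding T_def tau_max_def using that by (intro Max_ge) (auto simp del: atLeastAtMost_iff)
  have T0: "0 \<le> T" using tleT[of 1] assms by (metis atLeastAtMost_iff order.refl order.trans)
  have inI: "\<tau> k \<in> I" "- \<tau> k \<in> I" if "k \<in> {1..m}" for k
  proof -
    have "0 \<le> \<tau> k" using assms(2) that by blast
    then show "\<tau> k \<in> I" "- \<tau> k \<in> I" using tleT[OF that] unfolding I_def by auto
  qed
  have zI: "0 \<in> I" using T0 unfolding I_def by auto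
  have bc: "(u' 0 = M0 (A 0) B C D \<xi> *v u 0
              + (\<Sum>i=1..m. Mpos (A i) *v u (- \<tau> i) + Mneg (A i) *v u (\<tau> i))) \<longleftrightarrow>
            Dl m A B C D \<tau> \<xi> lam *v u 0 = 0"
    if "u' 0 = lam *s u 0" "\<forall>t\<in>I. u t = exp (lam * of_real t) *s u 0" for u u'
  proof -
    have "(\<Sum>i=1..m. Mpos (A i) *v u (- \<tau> i) + Mneg (A i) *v u (\<tau> i)) =
       (\<Sum>k=1..m. exp (- (lam * of_real (\<tau> k))) *s (Mpos (A k) *v u 0) + exp (lam * of_real (\<tau> k)) *s (Mneg (A k) *v u 0))"
      by (rule sum.cong[OF refl]) (simp add: that(2) inI vector_scalar_commute)
    then show ?thesis using that(1) by (simp add: Dl_mult)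
  qed
  show ?thesis
  proof
    assume "is_eigenvalue m A B C D \<tau> \<xi> lam"
    then obtain u u' where c1: "continuous_on I u" and
       d: "\<forall>t\<in>I. (u has_vector_derivative u' t) (at t within I)" and
       b: "u' 0 = M0 (A 0) B C D \<xi> *v u 0
              + (\<Sum>i=1..m. Mpos (A i) *v u (- \<tau> i) + Mneg (A i) *v u (\<tau> i))" and
       e: "\<forall>t\<in>I. u' t = lam *s u t" and nz: "\<exists>t\<in>I. u t \<noteq> 0"
      unfolding is_eigenvalue_def Let_def T_def[symmetric] I_def[symmetric] by blast
    have sol: "\<forall>t\<in>I. u t = exp (lam * of_real t) *s u 0"
    proof
      fix t assume tI: "t \<in> I"
      have "u t $ i = exp (lam * of_real t) * u 0 $ i" for i
      proof -
        define g where "g t = exp (- (lam * of_real t)) * u t $ i" for t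
        have gd: "(g has_vector_derivative 0) (at s within I)" if sI: "s \<in> I" for s
        proof -
          have d1: "((\<lambda>t. u t $ i) has_vector_derivative u' s $ i) (at s within I)"
            using bounded_linear.has_vector_derivative[OF bounded_linear_vec_nth d[rule_format, OF sI]] .
          have "((\<lambda>z. exp (- (lam * z))) has_field_derivative exp (- (lam * of_real s)) * (- lam)) (at (of_real s))"
            by (auto intro!: derivative_eq_intros)
          then have d2: "((\<lambda>t::real. exp (- (lam * of_real t))) has_vector_derivative exp (- (lam * of_real s)) * (- lam)) (at s within I)"
            by (rule has_vector_derivative_real_field)
          have "(g has_vector_derivative (exp (- (lam * of_real s)) * u' s $ i + exp (- (lam * of_real s)) * (- lam) * u s $ i)) (at s within I)"
            unfolding g_def by (rule has_vector_derivative_mult[OF d2 d1])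
          moreover have "exp (- (lam * of_real s)) * u' s $ i + exp (- (lam * of_real s)) * (- lam) * u s $ i = 0"
            using e sI by (simp add: algebra_simps)
          ultimately show ?thesis by simp
        qed
        have cv: "convex I" unfolding I_def by simp
        have "\<exists>c. \<forall>s\<in>I. g s = c"
          by (rule has_derivative_zero_constant[OF cv]) (use gd in \<open>auto simp: has_vector_derivative_def\<close>)
        then obtain c where "\<And>s. s \<in> I \<Longrightarrow> g s = c" by blast
        then have "g t = g 0" using tI zI by simp
        then have "exp (- (lam * of_real t)) * u t $ i = u 0 $ i" by (simp add: g_def)
        then have "exp (lam * of_real t) * (exp (- (lam * of_real t)) * u t $ i) = exp (lam * of_real t) * u 0 $ i" by simp
        then show ?thesis by (simp add: mult.assoc[symmetric] exp_minus)
      qed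
      then show "u t = exp (lam * of_real t) *s u 0" by (simp add: vec_eq_iff)
    qed
    have "u 0 \<noteq> 0"
    proof
      assume "u 0 = 0"
      from nz obtain t0 where "t0 \<in> I" "u t0 \<noteq> 0" by blast
      then show False using sol \<open>u 0 = 0\<close> by (simp add: Ball_def)
    qed
    moreover have "Dl m A B C D \<tau> \<xi> lam *v u 0 = 0"
    proof -
      have "u' 0 = lam *s u 0" using e zI by blast
      then show ?thesis using bc[OF _ sol] b by blast
    qed
    ultimately show "\<exists>v. v \<noteq> 0 \<and> Dl m A B C D \<tau> \<xi> lam *v v = 0" by blast
  next
    assume "\<exists>v. v \<noteq> 0 \<and> Dl m A B C D \<tau> \<xi> lam *v v = 0"
    then obtain v where v: "v \<noteq> 0" "Dl m A B C D \<tau> \<xi> lam *v v = 0" by blast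
    define u where "u t = exp (lam * of_real t) *s v" for t
    define u' where "u' t = exp (lam * of_real t) *s (lam *s v)" for t
    have du: "(u has_vector_derivative u' t) (at t within I)" for t
      unfolding u_def u'_def by (rule exp_deriv)
    have du': "(u' has_vector_derivative exp (lam * of_real t) *s (lam *s (lam *s v))) (at t within I)" for t
      unfolding u'_def by (rule exp_deriv)
    have "continuous_on I u"
      using du has_vector_derivative_continuous continuous_on_eq_continuous_within by blast
    moreover have "continuous_on I u'"
      using du' has_vector_derivative_continuous continuous_on_eq_continuous_within by blast
    moreover have e: "\<forall>t\<in>I. u' t = lam *s u t"
      by (simp add: u_def u'_def vector_smult_assoc mult.commute)
    moreover have u0: "u 0 = v" by (simp add: u_def)
    moreover have "\<forall>t\<in>I. u t = exp (lam * of_real t) *s u 0" by (simp add: u_def u0)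
    moreover have "u' 0 = lam *s u 0" using e zI by blast
    ultimately have "u' 0 = M0 (A 0) B C D \<xi> *v u 0
              + (\<Sum>i=1..m. Mpos (A i) *v u (- \<tau> i) + Mneg (A i) *v u (\<tau> i))"
      using bc[of u' u] v u0 by blast
    moreover have "\<exists>t\<in>I. u t \<noteq> 0" using zI u0 v(1) by blast
    ultimately show "is_eigenvalue m A B C D \<tau> \<xi> lam"
      unfolding is_eigenvalue_def Let_def T_def[symmetric] I_def[symmetric]
      using du \<open>continuous_on I u\<close> \<open>continuous_on I u'\<close> e by blast
  qed
qed

theorem proposition1:
  fixes m :: nat
    and A :: "nat \<Rightarrow> real^'n^'n"
    and B :: "real^'u^'n" and C :: "real^'n^'y" and D :: "real^'u^'y"
    and \<tau> :: "nat \<Rightarrow> real" and \<xi> :: real and lam :: complex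
  assumes "m \<ge> 1"
    and "\<forall>i\<in>{1..m}. \<tau> i \<ge> 0"
    and "\<xi> > 0"
    and "invertible (Dxi D \<xi>)"
  shows "is_eigenvalue m A B C D \<tau> \<xi> lam \<longleftrightarrow> is_eigenvalue m A B C D \<tau> \<xi> (- cnj lam)"
proof -
  have xi: "\<xi> \<noteq> 0" using assms(3) by simp
  have one: "is_eigenvalue m A B C D \<tau> \<xi> (- cnj l)" if H: "is_eigenvalue m A B C D \<tau> \<xi> l" for l
  proof -
    obtain v where "v \<noteq> 0" "Dl m A B C D \<tau> \<xi> l *v v = 0"
      using eig_iff[OF assms(1,2), THEN iffD1, OF H] by (elim exE conjE)
    then have "\<exists>w. w \<noteq> 0 \<and> Dl m A B C D \<tau> \<xi> (cnj l) *v w = 0"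
      by (rule null_cnj)
    then obtain w where "w \<noteq> 0" "Dl m A B C D \<tau> \<xi> (cnj l) *v w = 0"
      by (elim exE conjE)
    then have "\<exists>w. w \<noteq> 0 \<and> Dl m A B C D \<tau> \<xi> (- cnj l) *v w = 0"
      by (rule null_neg[OF assms(4) xi])
    then show ?thesis by (rule eig_iff[OF assms(1,2), THEN iffD2])
  qed
  have eq: "- cnj (- cnj lam) = lam" by simp
  show ?thesis
  proof
    assume "is_eigenvalue m A B C D \<tau> \<xi> lam"
    then show "is_eigenvalue m A B C D \<tau> \<xi> (- cnj lam)" by (rule one)
  next
    assume "is_eigenvalue m A B C D \<tau> \<xi> (- cnj lam)"
    from one[OF this] show "is_eigenvalue m A B C D \<tau> \<xi> lam" unfolding eq .
  qed
qed

end
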